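(* Let $f^0=0,f^1=0,\dots,f^r=0$ be DAEs in size $n$ such that, for each $k\in[r]$, $f^k$ is obtained from $f^{k-1}$ as $f^k(y,\dot y,\dots,t)=U^k(D_t)\,f^{k-1}(V^k(D_t)y,V^k(D_t)\dot y,\dots,t)$ with $U^k(D_t)=\operatorname{diag}\{D_t^{-p^k_i}\}U^k\operatorname{diag}\{D_t^{p^k_i}\}$, $V^k(D_t)=\operatorname{diag}\{D_t^{-q^k_i}\}V^k\operatorname{diag}\{D_t^{q^k_i}\}$, where $(p^k,q^k)$ is an optimal solution to $(\mathrm{D}_{f^{k-1}})$ and $U^k,V^k\in\mathbb{R}^{n\times n}$ are nonsingular, $U^k$ upper-triangular along $p^k$, $V^k$ upper-triangular along $q^k$, with $\operatorname{trank}(U^kJ_{f^{k-1}}^{p^k,q^k}V^k)<n$; and suppose $f^r=0$ is structurally nonsingular with system Jacobian not identically singular. Define the DAE $f^*=0$ of size $2n$ in the variable $(x(t),z(t))$ by $f^*_i=f^r_i(z,\dot z,\dots,t)$ and $f^*_{n+i}=x_i-\big(V^1(D_t)\cdots V^r(D_t)z\big)_i$ for $i\in[n]$. Then the system Jacobian of $f^*=0$ is nonsingular, i.e. $\det J_{f^*}^{p,q}\not\equiv0$ for an optimal solution $(p,q)$ of $(\mathrm{D}_{f^*})$.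
   Context: A DAE is $f(x,\dot x,\dots,x^{(k)},t)=0$ with $f$ smooth. Its $\sigma$-function is $\sigma_f(i,j)=\max\{l\in\mathbb{Z}_{\ge0}:\partial f_i/\partial x_j^{(l)}\not\equiv0\}$ ($\max\emptyset=-\infty$). $(\mathrm{D}_f)$: minimize $\sum_j q_j-\sum_i p_i$ subject to $q_j-p_i\ge\sigma_f(i,j)$, $p_i,q_j\in\mathbb{Z}_{\ge0}$; $\hat\delta_f$ denotes its optimal value ($-\infty$ if infeasible), and $f=0$ is structurally nonsingular if $\hat\delta_f\ne-\infty$. For optimal $(p,q)$ the system Jacobian is $J_f^{p,q}=\big(\partial f_i/\partial x_j^{(q_j-p_i)}\big)_{ij}$; it is nonsingular if its determinant is not identically zero (this does not depend on the choice of optimal $(p,q)$). $\operatorname{trank}$ is the term-rank (maximum number of not-identically-zero entries with no two in a common row or column). A matrix $U$ is upper-triangular along $p$ if $U_{ij}=0$ whenever $p_i>p_j$. $D_t=\mathrm{d}/\mathrm{d}t$, and the matrices $U^k(D_t),V^k(D_t)$ have entries polynomial in $D_t$. *)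

theory Defs
  imports "HOL-Analysis.Analysis"
begin

text \<open>Jet space: a point assigns a real value to every jet variable x_j^(l),
  indexed by the pair (j, l). A DAE of size n is a family of n such functions
  (equation index i < n), in the variables x_0, ..., x_(n-1).\<close>

type_synonym jet = "nat \<times> nat \<Rightarrow> real"
type_synonym dfun = "jet \<Rightarrow> real \<Rightarrow> real"

text \<open>Partial derivatives: Some (j,l) is the coordinate x_j^(l), None is t.\<close>
definition pd :: "(nat \<times> nat) option \<Rightarrow> dfun \<Rightarrow> dfun" where
  "pd c g = (case c of
      Some jl \<Rightarrow> (\<lambda>X t. deriv (\<lambda>s. g (X(jl := s)) t) (X jl))
    | None \<Rightarrow> (\<lambda>X t. deriv (\<lambda>s. g X s) t))"

definition pd_exists :: "(nat \<times> nat) option \<Rightarrow> dfun \<Rightarrow> bool" where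
  "pd_exists c g = (\<forall>X t. (case c of
      Some jl \<Rightarrow> (\<lambda>s. g (X(jl := s)) t) differentiable (at (X jl))
    | None \<Rightarrow> (\<lambda>s. g X s) differentiable (at t)))"

definition iter_pd :: "(nat \<times> nat) option list \<Rightarrow> dfun \<Rightarrow> dfun" where
  "iter_pd cs g = foldr pd cs g"

definition smooth_dfun :: "dfun \<Rightarrow> bool" where
  "smooth_dfun g = (\<forall>cs. continuous_on UNIV (\<lambda>(X, t). iter_pd cs g X t)
                       \<and> (\<forall>c. pd_exists c (iter_pd cs g)))"

definition depends_within :: "nat \<Rightarrow> nat \<Rightarrow> dfun \<Rightarrow> bool" where
  "depends_within n K g = (\<forall>X Y t. (\<forall>j<n. \<forall>l\<le>K. X (j, l) = Y (j, l)) \<longrightarrow> g X t = g Y t)"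

definition is_DAE :: "nat \<Rightarrow> (nat \<Rightarrow> dfun) \<Rightarrow> bool" where
  "is_DAE n f = (\<exists>K. \<forall>i<n. smooth_dfun (f i) \<and> depends_within n K (f i))"

definition not_ident_zero :: "dfun \<Rightarrow> bool" where
  "not_ident_zero g = (\<exists>X t. g X t \<noteq> 0)"

text \<open>sigma-function, with value -\<infinity> for the empty maximum.\<close>
definition sigma :: "(nat \<Rightarrow> dfun) \<Rightarrow> nat \<Rightarrow> nat \<Rightarrow> ereal" where
  "sigma f i j = (SUP l \<in> {l. not_ident_zero (pd (Some (j, l)) (f i))}. ereal (real l))"

definition dual_feasible :: "nat \<Rightarrow> (nat \<Rightarrow> dfun) \<Rightarrow> (nat \<Rightarrow> nat) \<Rightarrow> (nat \<Rightarrow> nat) \<Rightarrow> bool" where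
  "dual_feasible n f p q = (\<forall>i<n. \<forall>j<n. ereal (real_of_int (int (q j) - int (p i))) \<ge> sigma f i j)"

definition dual_obj :: "nat \<Rightarrow> (nat \<Rightarrow> nat) \<Rightarrow> (nat \<Rightarrow> nat) \<Rightarrow> int" where
  "dual_obj n p q = (\<Sum>j<n. int (q j)) - (\<Sum>i<n. int (p i))"

definition dual_optimal :: "nat \<Rightarrow> (nat \<Rightarrow> dfun) \<Rightarrow> (nat \<Rightarrow> nat) \<Rightarrow> (nat \<Rightarrow> nat) \<Rightarrow> bool" where
  "dual_optimal n f p q = (dual_feasible n f p q \<and>
      (\<forall>p' q'. dual_feasible n f p' q' \<longrightarrow> dual_obj n p q \<le> dual_obj n p' q'))"

text \<open>Structural nonsingularity: the optimal value of (D_f) is finite,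
  i.e. an optimal solution exists.\<close>
definition struct_nonsingular :: "nat \<Rightarrow> (nat \<Rightarrow> dfun) \<Rightarrow> bool" where
  "struct_nonsingular n f = (\<exists>p q. dual_optimal n f p q)"

definition detn :: "nat \<Rightarrow> (nat \<Rightarrow> nat \<Rightarrow> real) \<Rightarrow> real" where
  "detn n A = (\<Sum>\<pi> | \<pi> permutes {..<n}. of_int (sign \<pi>) * (\<Prod>i<n. A i (\<pi> i)))"

definition sys_jac :: "(nat \<Rightarrow> dfun) \<Rightarrow> (nat \<Rightarrow> nat) \<Rightarrow> (nat \<Rightarrow> nat) \<Rightarrow> nat \<Rightarrow> nat \<Rightarrow> dfun" where
  "sys_jac f p q i j = (if p i \<le> q j then pd (Some (j, q j - p i)) (f i) else (\<lambda>X t. 0))"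

definition jac_nonsingular_at :: "nat \<Rightarrow> (nat \<Rightarrow> dfun) \<Rightarrow> (nat \<Rightarrow> nat) \<Rightarrow> (nat \<Rightarrow> nat) \<Rightarrow> bool" where
  "jac_nonsingular_at n f p q = (\<exists>X t. detn n (\<lambda>i j. sys_jac f p q i j X t) \<noteq> 0)"

definition sys_jac_nonsingular :: "nat \<Rightarrow> (nat \<Rightarrow> dfun) \<Rightarrow> bool" where
  "sys_jac_nonsingular n f = (\<exists>p q. dual_optimal n f p q \<and> jac_nonsingular_at n f p q)"

definition trank :: "nat \<Rightarrow> (nat \<Rightarrow> nat \<Rightarrow> dfun) \<Rightarrow> nat" where
  "trank n M = Max {card S | S. S \<subseteq> {..<n} \<times> {..<n} \<and> inj_on fst S \<and> inj_on snd S
                               \<and> (\<forall>(i, j) \<in> S. not_ident_zero (M i j))}"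

definition upper_tri_along :: "nat \<Rightarrow> (nat \<Rightarrow> nat) \<Rightarrow> (nat \<Rightarrow> nat \<Rightarrow> real) \<Rightarrow> bool" where
  "upper_tri_along n p U = (\<forall>i<n. \<forall>j<n. p i > p j \<longrightarrow> U i j = 0)"

definition UJV :: "nat \<Rightarrow> (nat \<Rightarrow> nat \<Rightarrow> real) \<Rightarrow> (nat \<Rightarrow> nat \<Rightarrow> dfun) \<Rightarrow> (nat \<Rightarrow> nat \<Rightarrow> real)
                   \<Rightarrow> nat \<Rightarrow> nat \<Rightarrow> dfun" where
  "UJV n U J V i j = (\<lambda>X t. \<Sum>a<n. \<Sum>b<n. U i a * J a b X t * V b j)"

text \<open>Total time derivative D_t on jet space: the derivative along the vector
  field d/dt + sum x_j^(l+1) d/dx_j^(l).\<close>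
definition Dt :: "dfun \<Rightarrow> dfun" where
  "Dt h = (\<lambda>Y t. deriv (\<lambda>s. h (\<lambda>(j, l). Y (j, l) + s * Y (j, Suc l)) (t + s)) 0)"

text \<open>Jet of x = V(D_t) y, where V(D_t) = diag(D_t^{-q_i}) V diag(D_t^{q_i}),
  i.e. x_i = sum_j V_ij D_t^{q_j - q_i} y_j, so
  x_i^(l) = sum_j V_ij y_j^(q_j - q_i + l).\<close>
definition Vop_jet :: "nat \<Rightarrow> (nat \<Rightarrow> nat \<Rightarrow> real) \<Rightarrow> (nat \<Rightarrow> nat) \<Rightarrow> jet \<Rightarrow> jet" where
  "Vop_jet n V q Y = (\<lambda>(i, l). \<Sum>j<n. V i j * Y (j, q j + l - q i))"

text \<open>f^k = U(D_t) f^{k-1}(V(D_t) y, V(D_t) y', ..., t), with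
  U(D_t) = diag(D_t^{-p_i}) U diag(D_t^{p_i}).\<close>
definition transform_DAE :: "nat \<Rightarrow> (nat \<Rightarrow> nat \<Rightarrow> real) \<Rightarrow> (nat \<Rightarrow> nat) \<Rightarrow> (nat \<Rightarrow> nat \<Rightarrow> real)
                            \<Rightarrow> (nat \<Rightarrow> nat) \<Rightarrow> (nat \<Rightarrow> dfun) \<Rightarrow> nat \<Rightarrow> dfun" where
  "transform_DAE n U p V q f i =
     (\<lambda>Y t. \<Sum>j<n. U i j * (Dt ^^ (p j - p i)) (\<lambda>Y' t'. f j (Vop_jet n V q Y') t') Y t)"

text \<open>The augmented DAE f^* of size 2n in the variables (x, z): variable j < n
  is x_j, variable n + j is z_j.\<close>
definition aug_DAE :: "nat \<Rightarrow> nat \<Rightarrow> (nat \<Rightarrow> nat \<Rightarrow> nat \<Rightarrow> real) \<Rightarrow> (nat \<Rightarrow> nat \<Rightarrow> nat)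
                       \<Rightarrow> (nat \<Rightarrow> dfun) \<Rightarrow> nat \<Rightarrow> dfun" where
  "aug_DAE n r V q fr i =
     (\<lambda>W t. let Z = (\<lambda>(j, l). W (n + j, l)) in
        if i < n then fr i Z t
        else W (i - n, 0)
             - foldr (\<lambda>k Y. Vop_jet n (V k) (q k) Y) [1..<Suc r] Z (i - n, 0))"

end

theory Submission imports Defs "Jordan_Normal_Form.Determinant" begin
lemma detn_det: "detn n M = det (mat n n (\<lambda>(i,j). M i j))"
  unfolding detn_def det_def by (simp add: atLeast0LessThan)

lemma detn_block:
  fixes J :: "nat \<Rightarrow> nat \<Rightarrow> real"
  assumes "detn n J \<noteq> 0"
  shows "detn (2*n) (\<lambda>i c. if i < n then (if c < n then 0 else J i (c - n))
                       else (if c < n then (if c = i - n then 1 else 0) else 0)) \<noteq> 0"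
proof -
  let ?J = "mat n n (\<lambda>(i,j). J i j)"
  have eq: "mat (2*n) (2*n) (\<lambda>(i,c). if i < n then (if c < n then 0 else J i (c - n))
                       else (if c < n then (if c = i - n then 1 else 0) else 0))
        = four_block_mat (0\<^sub>m n n) ?J (1\<^sub>m n) (0\<^sub>m n n)"
    by (rule eq_matI) auto
  have "det (four_block_mat (0\<^sub>m n n) ?J (1\<^sub>m n) (0\<^sub>m n n)) = det (0\<^sub>m n n * 0\<^sub>m n n - ?J * 1\<^sub>m n)"
    by (rule det_four_block_mat) auto
  also have "0\<^sub>m n n * 0\<^sub>m n n - ?J * 1\<^sub>m n = - ?J"
    by (rule eq_matI) auto
  finally have "det (four_block_mat (0\<^sub>m n n) ?J (1\<^sub>m n) (0\<^sub>m n n)) = det (- ?J)" .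
  moreover have "det (- ?J) \<noteq> 0" using det_0_negate[of ?J n] assms by (simp add: detn_det)
  ultimately show ?thesis using eq by (simp add: detn_det)
qed
lemma sigma_ge:
  assumes "not_ident_zero (pd (Some (j, l)) (F i))"
  shows "ereal (real l) \<le> sigma F i j"
  unfolding sigma_def by (rule SUP_upper) (use assms in auto)

lemma sigma_le:
  assumes "\<And>l. not_ident_zero (pd (Some (j, l)) (F i)) \<Longrightarrow> ereal (real l) \<le> b"
  shows "sigma F i j \<le> b"
  unfolding sigma_def by (rule SUP_least) (use assms in auto)

lemma obj_perm:
  assumes "\<pi> permutes {..<N}"
  shows "(\<Sum>i<N. int (q (\<pi> i))) = (\<Sum>j<N. int (q j))"
  using sum.permutes_inv[OF assms] sum.reindex_bij_betw[OF permutes_imp_bij[OF assms], of "\<lambda>j. int (q j)"]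
  by simp

lemma opt_of_nonsing:
  assumes feas: "dual_feasible N F p q" and ns: "jac_nonsingular_at N F p q"
  shows "dual_optimal N F p q"
proof -
  obtain X t where d: "detn N (\<lambda>i j. sys_jac F p q i j X t) \<noteq> 0"
    using ns unfolding jac_nonsingular_at_def by blast
  obtain \<pi> where pi: "\<pi> permutes {..<N}" and pr: "(\<Prod>i<N. sys_jac F p q i (\<pi> i) X t) \<noteq> 0"
  proof (rule ccontr)
    assume "\<not> thesis"
    hence "\<forall>\<pi>. \<pi> permutes {..<N} \<longrightarrow> (\<Prod>i<N. sys_jac F p q i (\<pi> i) X t) = 0"
      using that by blast
    hence "detn N (\<lambda>i j. sys_jac F p q i j X t) = 0"
      unfolding detn_def by (intro sum.neutral) auto
    with d show False by simp
  qed
  have key: "int (q (\<pi> i)) - int (p i) \<le> int (q' (\<pi> i)) - int (p' i)"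
    if i: "i < N" and f': "dual_feasible N F p' q'" for i p' q'
  proof -
    have nz: "sys_jac F p q i (\<pi> i) X t \<noteq> 0" using pr i by auto
    hence le: "p i \<le> q (\<pi> i)" unfolding sys_jac_def by (auto split: if_splits)
    hence "not_ident_zero (pd (Some (\<pi> i, q (\<pi> i) - p i)) (F i))"
      using nz unfolding sys_jac_def not_ident_zero_def by auto
    hence s: "ereal (real (q (\<pi> i) - p i)) \<le> sigma F i (\<pi> i)" by (rule sigma_ge)
    have pii: "\<pi> i < N" using pi i by (meson lessThan_iff permutes_in_image)
    have "sigma F i (\<pi> i) \<le> ereal (real_of_int (int (q' (\<pi> i)) - int (p' i)))"
      using f' i pii unfolding dual_feasible_def by blast
    with s have "real (q (\<pi> i) - p i) \<le> real_of_int (int (q' (\<pi> i)) - int (p' i))"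
      by (metis ereal_less_eq(3) order_trans)
    thus ?thesis using le by linarith
  qed
  show ?thesis unfolding dual_optimal_def
  proof (intro conjI allI impI feas)
    fix p' q' assume f': "dual_feasible N F p' q'"
    have "(\<Sum>i<N. int (q (\<pi> i)) - int (p i)) \<le> (\<Sum>i<N. int (q' (\<pi> i)) - int (p' i))"
      by (rule sum_mono) (use key f' in auto)
    thus "dual_obj N p q \<le> dual_obj N p' q'"
      unfolding dual_obj_def sum_subtractf obj_perm[OF pi] by simp
  qed
qed
lemma pd_const:
  assumes "\<And>s. g (X(jl := s)) t = c"
  shows "pd (Some jl) g X t = 0"
proof -
  have "pd (Some jl) g X t = deriv (\<lambda>s. c) (X jl)"
    unfolding pd_def using assms by simp
  also have "\<dots> = 0" by (rule DERIV_imp_deriv) (rule DERIV_const)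
  finally show ?thesis .
qed

lemma pd_lin:
  assumes "\<And>s. g (X(jl := s)) t = s - c"
  shows "pd (Some jl) g X t = 1"
proof -
  have "pd (Some jl) g X t = deriv (\<lambda>s. s - c) (X jl)"
    unfolding pd_def using assms by simp
  also have "\<dots> = 1" by (rule DERIV_imp_deriv) (auto intro!: derivative_eq_intros)
  finally show ?thesis .
qed

definition bnd :: "nat \<Rightarrow> (nat \<Rightarrow> nat \<Rightarrow> nat) \<Rightarrow> nat list \<Rightarrow> nat" where
  "bnd n q ks = sum_list (map (\<lambda>k. \<Sum>j<n. q k j) ks)"

lemma dep:
  assumes "i < n" "\<And>j l'. j < n \<Longrightarrow> l' \<le> l + bnd n q ks \<Longrightarrow> Z (j, l') = Z' (j, l')"
  shows "foldr (\<lambda>k Y. Vop_jet n (V k) (q k) Y) ks Z (i, l)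
       = foldr (\<lambda>k Y. Vop_jet n (V k) (q k) Y) ks Z' (i, l)"
  using assms
proof (induction ks arbitrary: i l)
  case Nil
  then show ?case by (simp add: bnd_def)
next
  case (Cons k ks)
  have "foldr (\<lambda>k Y. Vop_jet n (V k) (q k) Y) ks Z (j, q k j + l - q k i)
      = foldr (\<lambda>k Y. Vop_jet n (V k) (q k) Y) ks Z' (j, q k j + l - q k i)" if j: "j < n" for j
  proof (rule Cons.IH[OF j])
    fix j' l' assume "j' < n" "l' \<le> q k j + l - q k i + bnd n q ks"
    moreover have "q k j \<le> (\<Sum>j<n. q k j)" using j by (intro member_le_sum) auto
    ultimately have "l' \<le> l + bnd n q (k # ks)" by (simp add: bnd_def)
    then show "Z (j', l') = Z' (j', l')" using Cons.prems(2) \<open>j' < n\<close> by blast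
  qed
  then show ?case by (simp add: Vop_jet_def)
qed


lemma detn_cong:
  assumes "\<And>i j. i < N \<Longrightarrow> j < N \<Longrightarrow> A i j = B i j"
  shows "detn N A = detn N B"
  unfolding detn_def
proof (rule sum.cong[OF refl])
  fix \<pi> assume "\<pi> \<in> {\<pi>. \<pi> permutes {..<N}}"
  hence "\<pi> permutes {..<N}" by simp
  hence "\<And>i. i < N \<Longrightarrow> \<pi> i < N" by (meson lessThan_iff permutes_in_image)
  thus "of_int (sign \<pi>) * (\<Prod>i<N. A i (\<pi> i)) = of_int (sign \<pi>) * (\<Prod>i<N. B i (\<pi> i))"
    using assms by (intro arg_cong2[where f = "(*)"] refl prod.cong) auto
qed

theorem theorem5:
  fixes n r :: nat
    and f :: "nat \<Rightarrow> nat \<Rightarrow> dfun"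
    and U V :: "nat \<Rightarrow> nat \<Rightarrow> nat \<Rightarrow> real"
    and p q :: "nat \<Rightarrow> nat \<Rightarrow> nat"
  assumes DAEs: "\<And>k. k \<le> r \<Longrightarrow> is_DAE n (f k)"
    and opt: "\<And>k. k \<in> {1..r} \<Longrightarrow> dual_optimal n (f (k - 1)) (p k) (q k)"
    and U_nonsing: "\<And>k. k \<in> {1..r} \<Longrightarrow> detn n (U k) \<noteq> 0"
    and V_nonsing: "\<And>k. k \<in> {1..r} \<Longrightarrow> detn n (V k) \<noteq> 0"
    and U_tri: "\<And>k. k \<in> {1..r} \<Longrightarrow> upper_tri_along n (p k) (U k)"
    and V_tri: "\<And>k. k \<in> {1..r} \<Longrightarrow> upper_tri_along n (q k) (V k)"
    and trank_lt: "\<And>k. k \<in> {1..r} \<Longrightarrow>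
          trank n (UJV n (U k) (sys_jac (f (k - 1)) (p k) (q k)) (V k)) < n"
    and step: "\<And>k i. k \<in> {1..r} \<Longrightarrow> i < n \<Longrightarrow>
          f k i = transform_DAE n (U k) (p k) (V k) (q k) (f (k - 1)) i"
    and sn: "struct_nonsingular n (f r)"
    and jac: "sys_jac_nonsingular n (f r)"
  shows "sys_jac_nonsingular (2 * n) (aug_DAE n r V q (f r))"
proof -
  obtain pr qr where optr: "dual_optimal n (f r) pr qr" and nsr: "jac_nonsingular_at n (f r) pr qr"
    using jac unfolding sys_jac_nonsingular_def by blast
  obtain X t where dX: "detn n (\<lambda>i j. sys_jac (f r) pr qr i j X t) \<noteq> 0"
    using nsr unfolding jac_nonsingular_at_def by blast
  have feasr: "dual_feasible n (f r) pr qr" using optr unfolding dual_optimal_def by blast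
  define Fs where "Fs = aug_DAE n r V q (f r)"
  define G where "G = (\<lambda>ZZ :: jet. foldr (\<lambda>k Y. Vop_jet n (V k) (q k) Y) [1..<Suc r] ZZ)"
  define M where "M = bnd n q [1..<Suc r] + 1"
  define ZW where "ZW = (\<lambda>W :: jet. (\<lambda>(j, l). W (n + j, l)) :: jet)"
  have Fs_eq: "Fs i W s = (if i < n then f r i (ZW W) s else W (i - n, 0) - G (ZW W) (i - n, 0))"
    for i W s unfolding Fs_def aug_DAE_def ZW_def G_def Let_def by simp
  have ZW_upd1: "ZW (W((c, l) := s)) = ZW W" if "c < n" for W c l s
    using that unfolding ZW_def by (auto simp: fun_eq_iff)
  have ZW_upd2: "ZW (W((c, l) := s)) = (ZW W)((c - n, l) := s)" if "n \<le> c" for W c l s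
    using that unfolding ZW_def by (auto simp: fun_eq_iff)
  have pa: "pd (Some (c, l)) (Fs i) W s = 0" if "i < n" "c < n" for i c l W s
    by (rule pd_const[where c = "f r i (ZW W) s"]) (use that in \<open>simp add: Fs_eq ZW_upd1\<close>)
  have pb: "pd (Some (c, l)) (Fs i) W s = pd (Some (c - n, l)) (f r i) (ZW W) s"
    if "i < n" "n \<le> c" for i c l W s
  proof -
    have "W (c, l) = ZW W (c - n, l)" using that unfolding ZW_def by simp
    thus ?thesis unfolding pd_def using that by (simp add: Fs_eq ZW_upd2)
  qed
  have pc: "pd (Some (c, l)) (Fs i) W s = (if c = i - n \<and> l = 0 then 1 else 0)"
    if "n \<le> i" "c < n" for i c l W s
  proof (cases "c = i - n \<and> l = 0")
    case True
    have "pd (Some (c, l)) (Fs i) W s = 1"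
      by (rule pd_lin[where c = "G (ZW W) (i - n, 0)"]) (use that True in \<open>simp add: Fs_eq ZW_upd1\<close>)
    then show ?thesis using True by simp
  next
    case False
    have "pd (Some (c, l)) (Fs i) W s = 0"
      by (rule pd_const[where c = "W (i - n, 0) - G (ZW W) (i - n, 0)"])
         (use that False in \<open>auto simp add: Fs_eq ZW_upd1\<close>)
    then show ?thesis using False by simp
  qed
  have pd4: "pd (Some (c, l)) (Fs i) W s = 0" if "n \<le> i" "i < 2 * n" "n \<le> c" "M \<le> l" for i c l W s
  proof (rule pd_const[where c = "W (i - n, 0) - G (ZW W) (i - n, 0)"])
    fix s'
    have "G (ZW (W((c, l) := s'))) (i - n, 0) = G (ZW W) (i - n, 0)"
      unfolding G_def
    proof (rule dep)
      show "i - n < n" using that by simp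
      fix j l' assume "j < n" "l' \<le> 0 + bnd n q [1..<Suc r]"
      then show "ZW (W((c, l) := s')) (j, l') = ZW W (j, l')"
        using that unfolding ZW_def M_def by auto
    qed
    moreover have "(W((c, l) := s')) (i - n, 0) = W (i - n, 0)" using that by auto
    ultimately show "Fs i (W((c, l) := s')) s = W (i - n, 0) - G (ZW W) (i - n, 0)"
      using that by (simp add: Fs_eq)
  qed
  define P where "P = (\<lambda>i. if i < n then pr i + M else 0)"
  define Q where "Q = (\<lambda>c. if c < n then 0 else qr (c - n) + M)"
  have feas: "dual_feasible (2 * n) Fs P Q"
    unfolding dual_feasible_def
  proof (intro allI impI)
    fix i c assume i: "i < 2 * n" and c: "c < 2 * n"
    show "sigma Fs i c \<le> ereal (real_of_int (int (Q c) - int (P i)))"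
    proof (rule sigma_le)
      fix l assume nz: "not_ident_zero (pd (Some (c, l)) (Fs i))"
      then obtain W s where Ws: "pd (Some (c, l)) (Fs i) W s \<noteq> 0"
        unfolding not_ident_zero_def by blast
      show "ereal (real l) \<le> ereal (real_of_int (int (Q c) - int (P i)))"
      proof (cases "i < n")
        case iT: True
        show ?thesis
        proof (cases "c < n")
          case True
          then show ?thesis using Ws pa iT by simp
        next
          case False
          hence "not_ident_zero (pd (Some (c - n, l)) (f r i))"
            using Ws pb iT unfolding not_ident_zero_def by auto
          hence "ereal (real l) \<le> sigma (f r) i (c - n)" by (rule sigma_ge)
          also have "\<dots> \<le> ereal (real_of_int (int (qr (c - n)) - int (pr i)))"
            using feasr iT False c unfolding dual_feasible_def by auto
          also have "\<dots> = ereal (real_of_int (int (Q c) - int (P i)))"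
            using iT False unfolding P_def Q_def by simp
          finally show ?thesis .
        qed
      next
        case iF: False
        show ?thesis
        proof (cases "c < n")
          case True
          then have "l = 0" using Ws pc iF by (auto split: if_splits)
          then show ?thesis using iF True unfolding P_def Q_def by simp
        next
          case False
          then have "l < M" using Ws pd4 iF i by (meson not_le)
          then show ?thesis using iF False unfolding P_def Q_def by simp
        qed
      qed
    qed
  qed
  define W0 where "W0 = (\<lambda>(c, l). if n \<le> c then X (c - n, l) else 0 :: real)"
  have ZW0: "ZW W0 = X" unfolding ZW_def W0_def by (auto simp: fun_eq_iff)
  define J where "J = (\<lambda>i j. sys_jac (f r) pr qr i j X t)"
  have entries: "sys_jac Fs P Q i c W0 t =
      (if i < n then (if c < n then 0 else J i (c - n))
                       else (if c < n then (if c = i - n then 1 else 0) else 0))"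
    if i: "i < 2 * n" and c: "c < 2 * n" for i c
  proof (cases "i < n")
    case iT: True
    show ?thesis
    proof (cases "c < n")
      case True
      then show ?thesis using iT unfolding sys_jac_def P_def Q_def M_def by simp
    next
      case False
      then show ?thesis using iT pb[of i c _ W0 t] unfolding sys_jac_def P_def Q_def J_def ZW0
        by (simp add: ZW0)
    qed
  next
    case iF: False
    show ?thesis
    proof (cases "c < n")
      case True
      then show ?thesis using iF pc[of i c 0 W0 t] unfolding sys_jac_def P_def Q_def by simp
    next
      case False
      then show ?thesis using iF i pd4[of i c "qr (c - n) + M" W0 t]
        unfolding sys_jac_def P_def Q_def by simp
    qed
  qed
  have "detn (2 * n) (\<lambda>i c. sys_jac Fs P Q i c W0 t) \<noteq> 0"
    using detn_cong[of "2 * n", OF entries] detn_block[of n J] dX unfolding J_def by simp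
  hence ns: "jac_nonsingular_at (2 * n) Fs P Q"
    unfolding jac_nonsingular_at_def by blast
  show ?thesis
    unfolding sys_jac_nonsingular_def Fs_def[symmetric]
    using opt_of_nonsing[OF feas ns] ns by blast
qed

end
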